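(* Let $\Gamma$ be a countable discrete group having Property $(T_{\ell_p})$ for some $1<p<\infty$, $p\neq2$. Then $\Gamma$ has Lubotzky's Property $(\tau)$.
   Context: All Banach spaces are complex; $\ell_p=\ell_p(\mathbf N)$, $q$ the conjugate exponent, $\mathbf O(\ell_p)$ the group of linear bijective isometries. An orthogonal representation of $\Gamma$ on $\ell_p$ is a homomorphism $\pi:\Gamma\to\mathbf O(\ell_p)$. A sequence of almost invariant vectors is a sequence of unit vectors $f_n$ with $\|\pi(g)f_n-f_n\|\to0$ for every $g\in\Gamma$. With $\pi^*$ the dual representation on $\ell_q$, $\ell'_p(\pi)$ is the annihilator in $\ell_p$ of the $\pi^*(\Gamma)$-invariant vectors of $\ell_q$. $\Gamma$ has Property $(T_{\ell_p})$ if for no orthogonal representation $\pi$ on $\ell_p$ does $\ell'_p(\pi)$ contain a sequence of almost invariant vectors. $\Gamma$ has Property $(\tau)$ if the trivial representation is not weakly contained in $\bigoplus_{H}\lambda'_{\Gamma/H}$, where $H$ ranges over finite index subgroups of $\Gamma$, $\lambda_{\Gamma/H}$ is the quasi-regular representation on $\ell_2(\Gamma/H)$, and $\lambda'_{\Gamma/H}$ is its restriction to the orthogonal complement of the invariant vectors (i.e. this direct sum has no sequence of almost invariant unit vectors). *)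

theory Defs
  imports "HOL-Analysis.Analysis" "HOL-Algebra.Coset"
begin

definition lp_space :: "real \<Rightarrow> (nat \<Rightarrow> complex) set" where
  "lp_space p = {f. summable (\<lambda>n. cmod (f n) powr p)}"

definition lp_norm :: "real \<Rightarrow> (nat \<Rightarrow> complex) \<Rightarrow> real" where
  "lp_norm p f = (\<Sum>n. cmod (f n) powr p) powr (1 / p)"

definition conj_exp :: "real \<Rightarrow> real" where
  "conj_exp p = p / (p - 1)"

definition lp_pairing :: "(nat \<Rightarrow> complex) \<Rightarrow> (nat \<Rightarrow> complex) \<Rightarrow> complex" where
  "lp_pairing f h = (\<Sum>n. f n * h n)"

definition unit_vec :: "nat \<Rightarrow> nat \<Rightarrow> complex" where
  "unit_vec k = (\<lambda>n. if n = k then 1 else 0)"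

definition lp_isometry :: "real \<Rightarrow> ((nat \<Rightarrow> complex) \<Rightarrow> (nat \<Rightarrow> complex)) \<Rightarrow> bool" where
  "lp_isometry p T \<longleftrightarrow>
     bij_betw T (lp_space p) (lp_space p) \<and>
     (\<forall>f\<in>lp_space p. \<forall>h\<in>lp_space p. \<forall>a b :: complex.
         T (\<lambda>n. a * f n + b * h n) = (\<lambda>n. a * T f n + b * T h n)) \<and>
     (\<forall>f\<in>lp_space p. lp_norm p (T f) = lp_norm p f)"

definition orth_rep ::
  "('g, 'b) monoid_scheme \<Rightarrow> real \<Rightarrow> ('g \<Rightarrow> (nat \<Rightarrow> complex) \<Rightarrow> (nat \<Rightarrow> complex)) \<Rightarrow> bool" where
  "orth_rep G p \<pi> \<longleftrightarrow>
     (\<forall>g\<in>carrier G. lp_isometry p (\<pi> g)) \<and>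
     (\<forall>g\<in>carrier G. \<forall>g'\<in>carrier G. \<forall>f\<in>lp_space p.
         \<pi> (g \<otimes>\<^bsub>G\<^esub> g') f = \<pi> g (\<pi> g' f))"

text \<open>Dual representation on l_q: pi*(g) is the transpose of pi(g^-1) w.r.t. the pairing,
  i.e. its n-th coordinate is the pairing of pi(g^-1) e_n with h.\<close>
definition dual_rep ::
  "('g, 'b) monoid_scheme \<Rightarrow> ('g \<Rightarrow> (nat \<Rightarrow> complex) \<Rightarrow> (nat \<Rightarrow> complex)) \<Rightarrow> 'g \<Rightarrow> (nat \<Rightarrow> complex) \<Rightarrow> (nat \<Rightarrow> complex)" where
  "dual_rep G \<pi> g h = (\<lambda>n. lp_pairing (\<pi> (inv\<^bsub>G\<^esub> g) (unit_vec n)) h)"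

definition lp_prime ::
  "('g, 'b) monoid_scheme \<Rightarrow> real \<Rightarrow> ('g \<Rightarrow> (nat \<Rightarrow> complex) \<Rightarrow> (nat \<Rightarrow> complex)) \<Rightarrow> (nat \<Rightarrow> complex) set" where
  "lp_prime G p \<pi> = {f \<in> lp_space p. \<forall>h \<in> lp_space (conj_exp p).
       (\<forall>g\<in>carrier G. dual_rep G \<pi> g h = h) \<longrightarrow> lp_pairing f h = 0}"

definition property_T_lp :: "('g, 'b) monoid_scheme \<Rightarrow> real \<Rightarrow> bool" where
  "property_T_lp G p \<longleftrightarrow>
     (\<forall>\<pi>. orth_rep G p \<pi> \<longrightarrow>
        \<not> (\<exists>f :: nat \<Rightarrow> nat \<Rightarrow> complex.
              (\<forall>k. f k \<in> lp_prime G p \<pi> \<and> lp_norm p (f k) = 1) \<and>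
              (\<forall>g\<in>carrier G. (\<lambda>k. lp_norm p (\<lambda>n. \<pi> g (f k) n - f k n)) \<longlonglongrightarrow> 0)))"

definition lcosets :: "('g, 'b) monoid_scheme \<Rightarrow> 'g set \<Rightarrow> 'g set set" where
  "lcosets G H = (\<lambda>x. x <#\<^bsub>G\<^esub> H) ` carrier G"

definition finite_index_subgroups :: "('g, 'b) monoid_scheme \<Rightarrow> 'g set set" where
  "finite_index_subgroups G = {H. subgroup H G \<and> finite (lcosets G H)}"

definition quasi_reg :: "('g, 'b) monoid_scheme \<Rightarrow> 'g \<Rightarrow> ('g set \<Rightarrow> complex) \<Rightarrow> ('g set \<Rightarrow> complex)" where
  "quasi_reg G g \<xi> = (\<lambda>c. \<xi> (inv\<^bsub>G\<^esub> g <#\<^bsub>G\<^esub> c))"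

definition quasi_reg_invariant :: "('g, 'b) monoid_scheme \<Rightarrow> 'g set \<Rightarrow> ('g set \<Rightarrow> complex) \<Rightarrow> bool" where
  "quasi_reg_invariant G H \<eta> \<longleftrightarrow>
     (\<forall>g\<in>carrier G. \<forall>c\<in>lcosets G H. quasi_reg G g \<eta> c = \<eta> c)"

definition l2_inner :: "('g, 'b) monoid_scheme \<Rightarrow> 'g set \<Rightarrow> ('g set \<Rightarrow> complex) \<Rightarrow> ('g set \<Rightarrow> complex) \<Rightarrow> complex" where
  "l2_inner G H \<xi> \<eta> = (\<Sum>c\<in>lcosets G H. \<xi> c * cnj (\<eta> c))"

definition l2_normsq :: "('g, 'b) monoid_scheme \<Rightarrow> 'g set \<Rightarrow> ('g set \<Rightarrow> complex) \<Rightarrow> real" where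
  "l2_normsq G H \<xi> = (\<Sum>c\<in>lcosets G H. (cmod (\<xi> c))\<^sup>2)"

text \<open>Vectors of the Hilbert direct sum over finite index subgroups H of the orthogonal
  complements of the invariant vectors in l_2(Gamma/H): families xi H, each component
  orthogonal to the invariant vectors, with square-summable norms.\<close>
definition tau_sum_space :: "('g, 'b) monoid_scheme \<Rightarrow> ('g set \<Rightarrow> 'g set \<Rightarrow> complex) set" where
  "tau_sum_space G = {\<xi>.
     (\<forall>H\<in>finite_index_subgroups G. \<forall>\<eta>. quasi_reg_invariant G H \<eta> \<longrightarrow> l2_inner G H (\<xi> H) \<eta> = 0) \<and>
     (\<lambda>H. l2_normsq G H (\<xi> H)) summable_on finite_index_subgroups G}"

definition tau_normsq :: "('g, 'b) monoid_scheme \<Rightarrow> ('g set \<Rightarrow> 'g set \<Rightarrow> complex) \<Rightarrow> real" where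
  "tau_normsq G \<xi> = (\<Sum>\<^sub>\<infinity>H\<in>finite_index_subgroups G. l2_normsq G H (\<xi> H))"

definition property_tau :: "('g, 'b) monoid_scheme \<Rightarrow> bool" where
  "property_tau G \<longleftrightarrow>
     \<not> (\<exists>\<xi> :: nat \<Rightarrow> 'g set \<Rightarrow> 'g set \<Rightarrow> complex.
          (\<forall>k. \<xi> k \<in> tau_sum_space G \<and> tau_normsq G (\<xi> k) = 1) \<and>
          (\<forall>g\<in>carrier G. (\<lambda>k. tau_normsq G (\<lambda>H. (\<lambda>c. quasi_reg G g (\<xi> k H) c - \<xi> k H c))) \<longlonglongrightarrow> 0))"

end

theory Submission
  imports Defs
begin


definition bdry :: "('s \<Rightarrow> 'x \<Rightarrow> 'x) \<Rightarrow> 'x set \<Rightarrow> 'x set \<Rightarrow> 's \<Rightarrow> 'x set" where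
  "bdry \<sigma> X A g = {c\<in>X. (\<sigma> g c \<in> A) \<noteq> (c \<in> A)}"

lemma amgm_sq:
  fixes a b eta :: real
  assumes "eta > 0"
  shows "\<bar>a\<^sup>2 - b\<^sup>2\<bar> \<le> (a - b)\<^sup>2 / (2*eta) + eta * (a\<^sup>2 + b\<^sup>2)"
proof -
  define x where "x = \<bar>a - b\<bar>"
  define y where "y = \<bar>a + b\<bar>"
  have e: "\<bar>a\<^sup>2 - b\<^sup>2\<bar> = x * y"
    unfolding x_def y_def by (simp add: power2_eq_square abs_mult[symmetric] algebra_simps)
  have "0 \<le> (x - eta*y)\<^sup>2" by simp
  hence "2*eta*(x*y) \<le> x\<^sup>2 + eta\<^sup>2*y\<^sup>2"
    by (simp add: power2_eq_square algebra_simps)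
  hence "x*y \<le> (x\<^sup>2 + eta\<^sup>2*y\<^sup>2) / (2*eta)"
    using assms by (simp add: field_simps)
  also have "\<dots> = x\<^sup>2/(2*eta) + eta * y\<^sup>2 / 2"
    using assms by (simp add: field_simps power2_eq_square)
  also have "x\<^sup>2 = (a-b)\<^sup>2" unfolding x_def by simp
  also have "y\<^sup>2 = (a+b)\<^sup>2" unfolding y_def by simp
  also have "(a+b)\<^sup>2 \<le> 2*(a\<^sup>2+b\<^sup>2)"
  proof -
    have "2*(a\<^sup>2+b\<^sup>2) - (a+b)\<^sup>2 = (a-b)\<^sup>2" by (simp add: power2_eq_square algebra_simps)
    thus ?thesis using zero_le_power2[of "a-b"] by linarith
  qed
  finally have "x * y \<le> (a - b)\<^sup>2 / (2 * eta) + eta * (2*(a\<^sup>2 + b\<^sup>2)) / 2"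
    using assms by (simp add: mult_left_mono)
  moreover have "eta * (2*(a\<^sup>2 + b\<^sup>2)) / 2 = eta*(a\<^sup>2+b\<^sup>2)" by simp
  ultimately show ?thesis using e by linarith
qed


lemma sum_indicator_card_enn:
  assumes "finite X"
  shows "(\<Sum>c\<in>X. indicator (B c) t :: ennreal) = of_nat (card {c\<in>X. t \<in> B c})"
proof -
  have "(\<Sum>c\<in>X. indicator (B c) t :: ennreal) = (\<Sum>c\<in>X. if t \<in> B c then 1 else 0)"
    by (auto intro!: sum.cong simp: indicator_def)
  also have "\<dots> = (\<Sum>c\<in>{c\<in>X. t \<in> B c}. 1)"
    using assms by (simp add: sum.If_cases Int_def)
  also have "\<dots> = of_nat (card {c\<in>X. t \<in> B c})" by simp
  finally show ?thesis .
qed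

lemma int_abs_diff:
  fixes a b :: real
  assumes "a \<ge> 0" "b \<ge> 0"
  shows "ennreal \<bar>a - b\<bar> = (\<integral>\<^sup>+t. indicator {min a b..<max a b} t \<partial>lborel)"
proof -
  have "\<bar>a - b\<bar> = max a b - min a b" by auto
  thus ?thesis by simp
qed

lemma int_pos:
  fixes a :: real
  assumes "a \<ge> 0"
  shows "ennreal a = (\<integral>\<^sup>+t. indicator {0..<a} t \<partial>lborel)"
  using assms by simp

lemma coarea_set:
  fixes X :: "'x set" and S :: "'s set" and \<sigma> :: "'s \<Rightarrow> 'x \<Rightarrow> 'x" and u :: "'x \<Rightarrow> real" and \<delta> :: real
  assumes X: "finite X" and S: "finite S"
    and bij: "\<And>g. g \<in> S \<Longrightarrow> bij_betw (\<sigma> g) X X"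
    and u0: "\<And>c. c \<in> X \<Longrightarrow> u c \<ge> 0"
    and supp: "2 * card {c\<in>X. u c \<noteq> 0} \<le> card X"
    and Npos: "(\<Sum>c\<in>X. (u c)\<^sup>2) > 0"
    and dpos: "\<delta> > 0"
    and E: "(\<Sum>g\<in>S. \<Sum>c\<in>X. (u (\<sigma> g c) - u c)\<^sup>2) \<le> \<delta>\<^sup>2/(4*(card S + 1)) * (\<Sum>c\<in>X. (u c)\<^sup>2)"
  shows "\<exists>A \<subseteq> X. A \<noteq> {} \<and> 2 * card A \<le> card X \<and> real (\<Sum>g\<in>S. card (bdry \<sigma> X A g)) \<le> 2*\<delta>*card A"
proof -
  define N where "N = (\<Sum>c\<in>X. (u c)\<^sup>2)"
  define v where "v c = (u c)\<^sup>2" for c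
  define s where "s = real (card S)"
  define eta where "eta = \<delta> / (4*(s+1))"
  have s0: "s \<ge> 0" unfolding s_def by simp
  have eta0: "eta > 0" unfolding eta_def using dpos s0 by simp
  have v0: "v c \<ge> 0" for c unfolding v_def by simp
  have vs: "(\<Sum>c\<in>X. v (\<sigma> g c)) = N" if "g \<in> S" for g
    using sum.reindex_bij_betw[OF bij[OF that], of v] unfolding N_def v_def by simp
  have step1: "(\<Sum>g\<in>S. \<Sum>c\<in>X. \<bar>v (\<sigma> g c) - v c\<bar>) \<le> \<delta> * N"
  proof -
    have "(\<Sum>g\<in>S. \<Sum>c\<in>X. \<bar>v (\<sigma> g c) - v c\<bar>) \<le>
          (\<Sum>g\<in>S. \<Sum>c\<in>X. (u (\<sigma> g c) - u c)\<^sup>2 / (2*eta) + eta * (v (\<sigma> g c) + v c))"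
      unfolding v_def by (intro sum_mono amgm_sq eta0)
    also have "\<dots> = (\<Sum>g\<in>S. \<Sum>c\<in>X. (u (\<sigma> g c) - u c)\<^sup>2) / (2*eta) + (\<Sum>g\<in>S. \<Sum>c\<in>X. eta * (v (\<sigma> g c) + v c))"
      by (simp add: sum.distrib sum_divide_distrib)
    also have "(\<Sum>g\<in>S. \<Sum>c\<in>X. eta * (v (\<sigma> g c) + v c)) = (\<Sum>g\<in>S. eta * (2*N))"
    proof (rule sum.cong)
      fix g assume g: "g \<in> S"
      have "(\<Sum>c\<in>X. eta * (v (\<sigma> g c) + v c)) = eta * ((\<Sum>c\<in>X. v (\<sigma> g c)) + (\<Sum>c\<in>X. v c))"
        by (simp only: sum.distrib distrib_left sum_distrib_left)
      also have "\<dots> = eta * (2*N)" using vs[OF g] unfolding N_def v_def by simp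
      finally show "(\<Sum>c\<in>X. eta * (v (\<sigma> g c) + v c)) = eta * (2*N)" .
    qed simp
    also have "(\<Sum>g\<in>S. eta * (2*N)) = eta * (s * (2*N))" unfolding s_def by simp
    also have "(\<Sum>g\<in>S. \<Sum>c\<in>X. (u (\<sigma> g c) - u c)\<^sup>2) / (2*eta) \<le> (\<delta>\<^sup>2/(4*(s + 1)) * N) / (2*eta)"
    proof -
      have E': "(\<Sum>g\<in>S. \<Sum>c\<in>X. (u (\<sigma> g c) - u c)\<^sup>2) \<le> \<delta>\<^sup>2/(4*(s + 1)) * N"
        using E unfolding N_def s_def by (simp add: add.commute)
      show ?thesis using divide_right_mono[OF E', of "2*eta"] eta0 by simp
    qed
    also have "(\<delta>\<^sup>2/(4*(s + 1)) * N) / (2*eta) = \<delta> * N / 2"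
    proof -
      have "s + 1 \<noteq> 0" "\<delta> \<noteq> 0" using s0 dpos by auto
      moreover have "\<delta> * 8 + \<delta> * (s * 8) \<noteq> 0" using s0 dpos
        by (smt (verit) mult_nonneg_nonneg)
      ultimately show ?thesis unfolding eta_def by (simp add: field_simps power2_eq_square)
    qed
    also have "eta * (s * (2*N)) = \<delta> * N / 2 * (s / (s+1))"
      unfolding eta_def using s0 by (simp add: field_simps)
    also have "\<dots> \<le> \<delta> * N / 2"
    proof -
      have "s/(s+1) \<le> 1" using s0 by simp
      moreover have "\<delta> * N / 2 \<ge> 0" using dpos Npos unfolding N_def by simp
      ultimately show ?thesis by (rule mult_left_le)
    qed
    finally show ?thesis by (simp add: mult.commute)
  qed
  define F where "F t = (\<Sum>g\<in>S. \<Sum>c\<in>X. indicator {min (v (\<sigma> g c)) (v c)..<max (v (\<sigma> g c)) (v c)} t :: ennreal)" for t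
  define G where "G t = (\<Sum>c\<in>X. indicator {0..<v c} t :: ennreal)" for t
  define T where "T = (\<Sum>g\<in>S. \<Sum>c\<in>X. \<bar>v (\<sigma> g c) - v c\<bar>)"
  have intF: "(\<integral>\<^sup>+t. F t \<partial>lborel) = ennreal T"
  proof -
    have "(\<integral>\<^sup>+t. F t \<partial>lborel) = (\<Sum>g\<in>S. \<Sum>c\<in>X. \<integral>\<^sup>+t. indicator {min (v (\<sigma> g c)) (v c)..<max (v (\<sigma> g c)) (v c)} t \<partial>lborel)"
      unfolding F_def by (simp add: nn_integral_sum)
    also have "\<dots> = (\<Sum>g\<in>S. \<Sum>c\<in>X. ennreal \<bar>v (\<sigma> g c) - v c\<bar>)"
      by (simp add: int_abs_diff[OF v0 v0])
    also have "\<dots> = ennreal T" unfolding T_def by (simp add: sum_nonneg)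
    finally show ?thesis .
  qed
  have intG: "(\<integral>\<^sup>+t. G t \<partial>lborel) = ennreal N"
  proof -
    have "(\<integral>\<^sup>+t. G t \<partial>lborel) = (\<Sum>c\<in>X. \<integral>\<^sup>+t. indicator {0..<v c} t \<partial>lborel)"
      unfolding G_def by (simp add: nn_integral_sum)
    also have "\<dots> = (\<Sum>c\<in>X. ennreal (v c))"
      by (simp add: int_pos[OF v0])
    also have "\<dots> = ennreal N" unfolding N_def v_def by simp
    finally show ?thesis .
  qed
  have N0: "N > 0" using Npos unfolding N_def .
  have "\<exists>t. F t < ennreal (2*\<delta>) * G t"
  proof (rule ccontr)
    assume "\<not> ?thesis"
    hence le: "ennreal (2*\<delta>) * G t \<le> F t" for t by (simp add: not_less)
    have Gm: "G \<in> borel_measurable lborel" unfolding G_def by measurable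
    have "(\<integral>\<^sup>+t. ennreal (2*\<delta>) * G t \<partial>lborel) \<le> (\<integral>\<^sup>+t. F t \<partial>lborel)"
      by (intro nn_integral_mono le)
    hence "ennreal (2*\<delta>) * ennreal N \<le> ennreal T"
      using intF intG nn_integral_cmult[OF Gm, of "ennreal (2*\<delta>)"] by simp
    hence "ennreal (2*\<delta>*N) \<le> ennreal T" using dpos N0 by (simp add: ennreal_mult)
    moreover have T0: "T \<ge> 0" unfolding T_def by (intro sum_nonneg) auto
    ultimately have "2*\<delta>*N \<le> T" by simp
    moreover have "\<delta>*N > 0" using dpos N0 by simp
    ultimately show False using step1 unfolding T_def by linarith
  qed
  then obtain t where t: "F t < ennreal (2*\<delta>) * G t" by blast
  define A where "A = {c\<in>X. t \<in> {0..<v c}}"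
  define B where "B g = {c\<in>X. t \<in> {min (v (\<sigma> g c)) (v c)..<max (v (\<sigma> g c)) (v c)}}" for g
  have Gt: "G t = of_nat (card A)" unfolding G_def A_def by (rule sum_indicator_card_enn[OF X])
  have Ft: "F t = of_nat (\<Sum>g\<in>S. card (B g))" unfolding F_def B_def
    by (simp add: sum_indicator_card_enn[OF X])
  have lt: "real (\<Sum>g\<in>S. card (B g)) < 2*\<delta>*card A"
  proof -
    have "ennreal (real (\<Sum>g\<in>S. card (B g))) < ennreal (2*\<delta>*card A)"
      using t unfolding Ft Gt using dpos
      by (simp add: ennreal_of_nat_eq_real_of_nat ennreal_mult)
    thus ?thesis by (subst (asm) ennreal_less_iff) (auto intro: sum_nonneg)
  qed
  have "card A \<noteq> 0"
  proof
    assume "card A = 0"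
    moreover have "(\<Sum>g\<in>S. real (card (B g))) \<ge> 0" by (intro sum_nonneg) auto
    ultimately show False using lt by simp
  qed
  hence "A \<noteq> {}" by auto
  then obtain c0 where "c0 \<in> A" by auto
  hence t0: "t \<ge> 0" unfolding A_def by auto
  have AX: "A \<subseteq> X" unfolding A_def by auto
  have Bb: "B g = bdry \<sigma> X A g" if "g \<in> S" for g
  proof -
    have "\<sigma> g c \<in> X" if "c \<in> X" for c using bij[OF \<open>g\<in>S\<close>] that by (auto simp: bij_betw_def)
    thus ?thesis unfolding B_def bdry_def A_def using t0 by (auto simp: min_def max_def)
  qed
  have "A \<subseteq> {c\<in>X. u c \<noteq> 0}" unfolding A_def v_def using t0 by auto
  hence "card A \<le> card {c\<in>X. u c \<noteq> 0}" using X by (intro card_mono) auto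
  hence "2 * card A \<le> card X" using supp by simp
  moreover have "real (\<Sum>g\<in>S. card (bdry \<sigma> X A g)) \<le> 2*\<delta>*card A"
  proof -
    have "(\<Sum>g\<in>S. card (bdry \<sigma> X A g)) = (\<Sum>g\<in>S. card (B g))"
      by (rule sum.cong) (simp_all add: Bb)
    thus ?thesis using lt by simp
  qed
  ultimately show ?thesis using AX \<open>A \<noteq> {}\<close> by blast
qed


lemma pos_neg_sq:
  fixes x y :: real
  shows "(max x 0 - max y 0)\<^sup>2 + (max (-x) 0 - max (-y) 0)\<^sup>2 \<le> (x - y)\<^sup>2"
proof (cases "x \<ge> 0"; cases "y \<ge> 0")
  assume "x \<ge> 0" "\<not> y \<ge> 0"
  hence "0 \<le> - (x*y)" by (simp add: mult_nonneg_nonpos)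
  thus ?thesis using \<open>x \<ge> 0\<close> \<open>\<not> y \<ge> 0\<close> by (simp add: max_def power2_eq_square algebra_simps)
next
  assume "\<not> x \<ge> 0" "y \<ge> 0"
  hence "0 \<le> - (x*y)" by (simp add: mult_nonpos_nonneg)
  thus ?thesis using \<open>\<not> x \<ge> 0\<close> \<open>y \<ge> 0\<close> by (simp add: max_def power2_eq_square algebra_simps)
qed (auto simp: max_def power2_eq_square algebra_simps)

lemma median_exists:
  fixes f :: "'x \<Rightarrow> real"
  assumes X: "finite X" "X \<noteq> {}"
  shows "\<exists>m. 2 * card {c\<in>X. m < f c} \<le> card X \<and> 2 * card {c\<in>X. f c < m} \<le> card X"
proof -
  define V where "V = f ` X"
  define P where "P m \<longleftrightarrow> 2 * card {c\<in>X. m < f c} \<le> card X" for m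
  have Vf: "finite V" "V \<noteq> {}" unfolding V_def using X by auto
  have "P (Max V)"
  proof -
    have "{c\<in>X. Max V < f c} = {}" using Vf unfolding V_def by (auto simp: not_less)
    hence "card {c\<in>X. Max V < f c} = 0" by (simp only: card.empty)
    thus ?thesis unfolding P_def by simp
  qed
  hence ne: "{v\<in>V. P v} \<noteq> {}" using Max_in[OF Vf] by blast
  have fin: "finite {v\<in>V. P v}" using Vf by auto
  define m where "m = Min {v\<in>V. P v}"
  have mP: "P m" using Min_in[OF fin ne] unfolding m_def by auto
  have mmin: "\<And>v. v \<in> V \<Longrightarrow> P v \<Longrightarrow> m \<le> v" unfolding m_def using fin by auto
  have "2 * card {c\<in>X. f c < m} \<le> card X"
  proof (cases "{c\<in>X. f c < m} = {}")
    case True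
    hence "card {c\<in>X. f c < m} = 0" by (simp only: card.empty)
    thus ?thesis by simp
  next
    case False
    define W where "W = {v\<in>V. v < m}"
    have Wf: "finite W" "W \<noteq> {}" unfolding W_def V_def using False Vf(1) unfolding V_def by auto
    define m' where "m' = Max W"
    have m'W: "m' \<in> W" unfolding m'_def using Max_in[OF Wf] .
    hence "m' \<in> V" "m' < m" unfolding W_def by auto
    hence nP: "\<not> P m'" using mmin by force
    have key: "m \<le> f c" if c: "c \<in> X" "m' < f c" for c
    proof (rule ccontr)
      assume "\<not> m \<le> f c"
      hence "f c \<in> W" using c unfolding W_def V_def by auto
      hence "f c \<le> m'" unfolding m'_def using Wf by auto
      thus False using c by auto
    qed
    have eq: "{c\<in>X. m' < f c} = {c\<in>X. m \<le> f c}"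
      using key \<open>m' < m\<close> by force
    have "card {c\<in>X. f c < m} + card {c\<in>X. m \<le> f c} = card ({c\<in>X. f c < m} \<union> {c\<in>X. m \<le> f c})"
      using X by (intro card_Un_disjoint[symmetric]) auto
    also have "\<dots> \<le> card X" using X by (intro card_mono) auto
    finally have c1: "card {c\<in>X. f c < m} + card {c\<in>X. m \<le> f c} \<le> card X" .
    have "\<not> 2 * card {c\<in>X. m \<le> f c} \<le> card X" using nP unfolding P_def eq[symmetric] .
    thus ?thesis using c1 by linarith
  qed
  thus ?thesis using mP unfolding P_def by blast
qed

lemma real_to_set:
  fixes X :: "'x set" and S :: "'s set" and \<sigma> :: "'s \<Rightarrow> 'x \<Rightarrow> 'x" and f :: "'x \<Rightarrow> real" and \<delta> :: real
  assumes X: "finite X" and S: "finite S"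
    and bij: "\<And>g. g \<in> S \<Longrightarrow> bij_betw (\<sigma> g) X X"
    and f0: "(\<Sum>c\<in>X. f c) = 0"
    and Npos: "(\<Sum>c\<in>X. (f c)\<^sup>2) > 0"
    and dpos: "\<delta> > 0"
    and E: "(\<Sum>g\<in>S. \<Sum>c\<in>X. (f (\<sigma> g c) - f c)\<^sup>2) \<le> \<delta>\<^sup>2/(4*(card S + 1)) * (\<Sum>c\<in>X. (f c)\<^sup>2)"
  shows "\<exists>A \<subseteq> X. A \<noteq> {} \<and> 2 * card A \<le> card X \<and> real (\<Sum>g\<in>S. card (bdry \<sigma> X A g)) \<le> 2*\<delta>*card A"
proof -
  have "X \<noteq> {}" using Npos by auto
  then obtain m where m: "2 * card {c\<in>X. m < f c} \<le> card X" "2 * card {c\<in>X. f c < m} \<le> card X"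
    using median_exists[OF X] by blast
  define \<kappa> where "\<kappa> = \<delta>\<^sup>2/(4*(card S + 1))"
  have k0: "\<kappa> > 0" unfolding \<kappa>_def using dpos by simp
  define u1 where "u1 c = max (f c - m) 0" for c
  define u2 where "u2 c = max (-(f c - m)) 0" for c
  define N1 where "N1 = (\<Sum>c\<in>X. (u1 c)\<^sup>2)"
  define N2 where "N2 = (\<Sum>c\<in>X. (u2 c)\<^sup>2)"
  define E1 where "E1 = (\<Sum>g\<in>S. \<Sum>c\<in>X. (u1 (\<sigma> g c) - u1 c)\<^sup>2)"
  define E2 where "E2 = (\<Sum>g\<in>S. \<Sum>c\<in>X. (u2 (\<sigma> g c) - u2 c)\<^sup>2)"
  define Ef where "Ef = (\<Sum>g\<in>S. \<Sum>c\<in>X. (f (\<sigma> g c) - f c)\<^sup>2)"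
  have "E1 + E2 = (\<Sum>g\<in>S. \<Sum>c\<in>X. (u1 (\<sigma> g c) - u1 c)\<^sup>2 + (u2 (\<sigma> g c) - u2 c)\<^sup>2)"
    unfolding E1_def E2_def by (simp add: sum.distrib)
  also have "\<dots> \<le> Ef" unfolding Ef_def
  proof (intro sum_mono)
    fix g c
    show "(u1 (\<sigma> g c) - u1 c)\<^sup>2 + (u2 (\<sigma> g c) - u2 c)\<^sup>2 \<le> (f (\<sigma> g c) - f c)\<^sup>2"
      using pos_neg_sq[of "f (\<sigma> g c) - m" "f c - m"] unfolding u1_def u2_def by simp
  qed
  finally have E12: "E1 + E2 \<le> Ef" .
  have "N1 + N2 = (\<Sum>c\<in>X. (f c - m)\<^sup>2)"
    unfolding N1_def N2_def sum.distrib[symmetric]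
    by (intro sum.cong) (auto simp: u1_def u2_def max_def power2_commute)
  also have "\<dots> = (\<Sum>c\<in>X. (f c)\<^sup>2 - (2*m)*f c + m\<^sup>2)"
    by (intro sum.cong) (simp_all add: power2_diff algebra_simps)
  also have "\<dots> = (\<Sum>c\<in>X. (f c)\<^sup>2) - (\<Sum>c\<in>X. (2*m)*f c) + (\<Sum>c\<in>X. m\<^sup>2)"
    by (simp only: sum.distrib sum_subtractf)
  also have "\<dots> = (\<Sum>c\<in>X. (f c)\<^sup>2) - 2*m*(\<Sum>c\<in>X. f c) + card X * m\<^sup>2"
    by (simp only: sum_distrib_left[symmetric]) simp
  also have "\<dots> \<ge> (\<Sum>c\<in>X. (f c)\<^sup>2)" using f0 by simp
  finally have N12: "N1 + N2 \<ge> (\<Sum>c\<in>X. (f c)\<^sup>2)" .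
  have N0: "N1 \<ge> 0" "N2 \<ge> 0" unfolding N1_def N2_def by (auto intro: sum_nonneg)
  have E0: "E1 \<ge> 0" "E2 \<ge> 0" unfolding E1_def E2_def by (auto intro!: sum_nonneg)
  have "(N1 > 0 \<and> E1 \<le> \<kappa> * N1) \<or> (N2 > 0 \<and> E2 \<le> \<kappa> * N2)"
  proof (rule ccontr)
    assume a: "\<not> ?thesis"
    have i1: "E1 \<ge> \<kappa> * N1" using a E0 N0 by (cases "N1 > 0") auto
    have i2: "E2 \<ge> \<kappa> * N2" using a E0 N0 by (cases "N2 > 0") auto
    have "N1 > 0 \<or> N2 > 0" using N12 Npos N0 by linarith
    hence "E1 + E2 > \<kappa> * (N1 + N2)" using a i1 i2 by (auto simp: distrib_left)
    moreover have "\<kappa> * (N1 + N2) \<ge> \<kappa> * (\<Sum>c\<in>X. (f c)\<^sup>2)" using N12 k0 by simp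
    ultimately show False using E12 E unfolding Ef_def \<kappa>_def by linarith
  qed
  thus ?thesis
  proof
    assume h: "N1 > 0 \<and> E1 \<le> \<kappa> * N1"
    show ?thesis
    proof (rule coarea_set[OF X S bij, where u=u1])
      show "\<And>c. c \<in> X \<Longrightarrow> 0 \<le> u1 c" unfolding u1_def by simp
      have "{c\<in>X. u1 c \<noteq> 0} = {c\<in>X. m < f c}" unfolding u1_def by (auto simp: max_def)
      thus "2 * card {c\<in>X. u1 c \<noteq> 0} \<le> card X" using m by simp
      show "0 < (\<Sum>c\<in>X. (u1 c)\<^sup>2)" using h unfolding N1_def by simp
      show "\<delta> > 0" by fact
      show "(\<Sum>g\<in>S. \<Sum>c\<in>X. (u1 (\<sigma> g c) - u1 c)\<^sup>2) \<le> \<delta>\<^sup>2/(4*(card S + 1)) * (\<Sum>c\<in>X. (u1 c)\<^sup>2)"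
        using h unfolding E1_def N1_def \<kappa>_def by simp
    qed
  next
    assume h: "N2 > 0 \<and> E2 \<le> \<kappa> * N2"
    show ?thesis
    proof (rule coarea_set[OF X S bij, where u=u2])
      show "\<And>c. c \<in> X \<Longrightarrow> 0 \<le> u2 c" unfolding u2_def by simp
      have "{c\<in>X. u2 c \<noteq> 0} = {c\<in>X. f c < m}" unfolding u2_def by (auto simp: max_def)
      thus "2 * card {c\<in>X. u2 c \<noteq> 0} \<le> card X" using m by simp
      show "0 < (\<Sum>c\<in>X. (u2 c)\<^sup>2)" using h unfolding N2_def by simp
      show "\<delta> > 0" by fact
      show "(\<Sum>g\<in>S. \<Sum>c\<in>X. (u2 (\<sigma> g c) - u2 c)\<^sup>2) \<le> \<delta>\<^sup>2/(4*(card S + 1)) * (\<Sum>c\<in>X. (u2 c)\<^sup>2)"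
        using h unfolding E2_def N2_def \<kappa>_def by simp
    qed
  qed
qed


lemma sq_le_cmod_sq_Re: "(Re z)\<^sup>2 \<le> (cmod z)\<^sup>2"
  using cmod_power2[of z] by simp

lemma sq_le_cmod_sq_Im: "(Im z)\<^sup>2 \<le> (cmod z)\<^sup>2"
  using cmod_power2[of z] by simp

lemma complex_to_set_aux:
  fixes X :: "'x set" and S :: "'s set" and \<sigma> :: "'s \<Rightarrow> 'x \<Rightarrow> 'x" and \<xi> :: "'x \<Rightarrow> complex" and \<delta> :: real
    and R :: "complex \<Rightarrow> real"
  assumes X: "finite X" and S: "finite S"
    and bij: "\<And>g. g \<in> S \<Longrightarrow> bij_betw (\<sigma> g) X X"
    and dpos: "\<delta> > 0"
    and Rsum: "(\<Sum>c\<in>X. R (\<xi> c)) = 0"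
    and Rdiff: "\<And>a b. (R a - R b)\<^sup>2 \<le> (cmod (a - b))\<^sup>2"
    and big: "(\<Sum>c\<in>X. (cmod (\<xi> c))\<^sup>2) \<le> 2 * (\<Sum>c\<in>X. (R (\<xi> c))\<^sup>2)"
    and Mpos: "(\<Sum>c\<in>X. (cmod (\<xi> c))\<^sup>2) > 0"
    and E: "(\<Sum>g\<in>S. \<Sum>c\<in>X. (cmod (\<xi> (\<sigma> g c) - \<xi> c))\<^sup>2) \<le> \<delta>\<^sup>2/(8*(card S + 1)) * (\<Sum>c\<in>X. (cmod (\<xi> c))\<^sup>2)"
  shows "\<exists>A \<subseteq> X. A \<noteq> {} \<and> 2 * card A \<le> card X \<and> real (\<Sum>g\<in>S. card (bdry \<sigma> X A g)) \<le> 2*\<delta>*card A"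
proof (rule real_to_set[OF X S bij, where f = "\<lambda>c. R (\<xi> c)"])
  show "(\<Sum>c\<in>X. R (\<xi> c)) = 0" by fact
  show "0 < (\<Sum>c\<in>X. (R (\<xi> c))\<^sup>2)" using big Mpos by linarith
  show "\<delta> > 0" by fact
  have "(\<Sum>g\<in>S. \<Sum>c\<in>X. (R (\<xi> (\<sigma> g c)) - R (\<xi> c))\<^sup>2) \<le> (\<Sum>g\<in>S. \<Sum>c\<in>X. (cmod (\<xi> (\<sigma> g c) - \<xi> c))\<^sup>2)"
    by (intro sum_mono Rdiff)
  also have "\<dots> \<le> \<delta>\<^sup>2/(8*(card S + 1)) * (\<Sum>c\<in>X. (cmod (\<xi> c))\<^sup>2)" by fact
  also have "\<dots> \<le> \<delta>\<^sup>2/(8*(card S + 1)) * (2 * (\<Sum>c\<in>X. (R (\<xi> c))\<^sup>2))"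
    using big by (intro mult_left_mono) auto
  also have "\<dots> = \<delta>\<^sup>2/(4*(card S + 1)) * (\<Sum>c\<in>X. (R (\<xi> c))\<^sup>2)"
  proof -
    have e8: "real (8*(card S + 1)) = 2 * real (4*(card S + 1))" by simp
    have d0: "real (4*(card S + 1)) > 0" by simp
    have "\<And>a y. a / (2 * real (4*(card S + 1))) * (2*y) = a / real (4*(card S + 1)) * y"
      using d0 by (simp add: field_simps)
    thus ?thesis by (simp only: e8)
  qed
  finally show "(\<Sum>g\<in>S. \<Sum>c\<in>X. (R (\<xi> (\<sigma> g c)) - R (\<xi> c))\<^sup>2) \<le> \<delta>\<^sup>2/(4*(card S + 1)) * (\<Sum>c\<in>X. (R (\<xi> c))\<^sup>2)" .
qed

lemma complex_to_set:
  fixes X :: "'x set" and S :: "'s set" and \<sigma> :: "'s \<Rightarrow> 'x \<Rightarrow> 'x" and \<xi> :: "'x \<Rightarrow> complex" and \<delta> :: real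
  assumes X: "finite X" and S: "finite S"
    and bij: "\<And>g. g \<in> S \<Longrightarrow> bij_betw (\<sigma> g) X X"
    and dpos: "\<delta> > 0"
    and xsum: "(\<Sum>c\<in>X. \<xi> c) = 0"
    and Mpos: "(\<Sum>c\<in>X. (cmod (\<xi> c))\<^sup>2) > 0"
    and E: "(\<Sum>g\<in>S. \<Sum>c\<in>X. (cmod (\<xi> (\<sigma> g c) - \<xi> c))\<^sup>2) \<le> \<delta>\<^sup>2/(8*(card S + 1)) * (\<Sum>c\<in>X. (cmod (\<xi> c))\<^sup>2)"
  shows "\<exists>A \<subseteq> X. A \<noteq> {} \<and> 2 * card A \<le> card X \<and> real (\<Sum>g\<in>S. card (bdry \<sigma> X A g)) \<le> 2*\<delta>*card A"
proof -
  have M: "(\<Sum>c\<in>X. (cmod (\<xi> c))\<^sup>2) = (\<Sum>c\<in>X. (Re (\<xi> c))\<^sup>2) + (\<Sum>c\<in>X. (Im (\<xi> c))\<^sup>2)"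
    by (simp add: cmod_power2 sum.distrib)
  have r0: "(\<Sum>c\<in>X. Re (\<xi> c)) = 0" using arg_cong[OF xsum, of Re] by simp
  have i0: "(\<Sum>c\<in>X. Im (\<xi> c)) = 0" using arg_cong[OF xsum, of Im] by simp
  show ?thesis
  proof (cases "(\<Sum>c\<in>X. (Im (\<xi> c))\<^sup>2) \<le> (\<Sum>c\<in>X. (Re (\<xi> c))\<^sup>2)")
    case True
    have Rd: "\<And>a b. (Re a - Re b)\<^sup>2 \<le> (cmod (a - b))\<^sup>2" using sq_le_cmod_sq_Re by (metis minus_complex.simps(1))
    have big: "(\<Sum>c\<in>X. (cmod (\<xi> c))\<^sup>2) \<le> 2 * (\<Sum>c\<in>X. (Re (\<xi> c))\<^sup>2)" using M True by linarith
    show ?thesis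
      apply (rule complex_to_set_aux[where R = Re and \<xi> = \<xi> and \<sigma> = \<sigma>])
      using X S bij dpos r0 Rd big Mpos E by auto
  next
    case False
    have Rd: "\<And>a b. (Im a - Im b)\<^sup>2 \<le> (cmod (a - b))\<^sup>2" using sq_le_cmod_sq_Im by (metis minus_complex.simps(2))
    have big: "(\<Sum>c\<in>X. (cmod (\<xi> c))\<^sup>2) \<le> 2 * (\<Sum>c\<in>X. (Im (\<xi> c))\<^sup>2)" using M False by linarith
    show ?thesis
      apply (rule complex_to_set_aux[where R = Im and \<xi> = \<xi> and \<sigma> = \<sigma>])
      using X S bij dpos i0 Rd big Mpos E by auto
  qed
qed



lemma lcosets_act_bij:
  assumes G: "group G" and H: "subgroup H G" and g: "g \<in> carrier G"
  shows "bij_betw (\<lambda>c. g <#\<^bsub>G\<^esub> c) (lcosets G H) (lcosets G H)"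
proof -
  interpret group G by fact
  have Hs: "H \<subseteq> carrier G" using H by (rule subgroup.subset)
  have ig: "inv\<^bsub>G\<^esub> g \<in> carrier G" using g by simp
  have maps: "h <#\<^bsub>G\<^esub> c \<in> lcosets G H" if hc: "h \<in> carrier G" "c \<in> lcosets G H" for h c
  proof -
    obtain x where x: "x \<in> carrier G" "c = x <#\<^bsub>G\<^esub> H" using hc(2) unfolding lcosets_def by auto
    have "h <#\<^bsub>G\<^esub> c = (h \<otimes>\<^bsub>G\<^esub> x) <#\<^bsub>G\<^esub> H" using x hc(1) Hs by (simp add: lcos_m_assoc)
    thus ?thesis unfolding lcosets_def using x hc(1) by auto
  qed
  have sub: "c \<subseteq> carrier G" if cc: "c \<in> lcosets G H" for c
  proof -
    obtain x where x: "x \<in> carrier G" "c = x <#\<^bsub>G\<^esub> H" using cc unfolding lcosets_def by auto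
    thus ?thesis using l_coset_subset_G[OF Hs x(1)] by simp
  qed
  show ?thesis
  proof (rule bij_betw_byWitness[where f' = "\<lambda>c. inv\<^bsub>G\<^esub> g <#\<^bsub>G\<^esub> c"])
    show "\<forall>a\<in>lcosets G H. inv\<^bsub>G\<^esub> g <#\<^bsub>G\<^esub> (g <#\<^bsub>G\<^esub> a) = a"
      using g ig sub by (simp add: lcos_m_assoc lcos_mult_one)
    show "\<forall>a\<in>lcosets G H. g <#\<^bsub>G\<^esub> (inv\<^bsub>G\<^esub> g <#\<^bsub>G\<^esub> a) = a"
      using g ig sub by (simp add: lcos_m_assoc lcos_mult_one)
    show "(\<lambda>c. g <#\<^bsub>G\<^esub> c) ` lcosets G H \<subseteq> lcosets G H" using maps g by auto
    show "(\<lambda>c. inv\<^bsub>G\<^esub> g <#\<^bsub>G\<^esub> c) ` lcosets G H \<subseteq> lcosets G H" using maps ig by auto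
  qed
qed

lemma finite_sum_infsum:
  fixes f :: "'s \<Rightarrow> 'a \<Rightarrow> real"
  assumes "finite S" "\<And>g. g \<in> S \<Longrightarrow> f g summable_on A"
  shows "(\<lambda>x. \<Sum>g\<in>S. f g x) summable_on A \<and> infsum (\<lambda>x. \<Sum>g\<in>S. f g x) A = (\<Sum>g\<in>S. infsum (f g) A)"
  using assms
proof (induction S rule: finite_induct)
  case empty thus ?case by simp
next
  case (insert a S)
  hence IH: "(\<lambda>x. \<Sum>g\<in>S. f g x) summable_on A" "infsum (\<lambda>x. \<Sum>g\<in>S. f g x) A = (\<Sum>g\<in>S. infsum (f g) A)"
    by auto
  have fa: "f a summable_on A" using insert by auto
  have "(\<lambda>x. f a x + (\<Sum>g\<in>S. f g x)) summable_on A" using summable_on_add[OF fa IH(1)] .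
  moreover have "infsum (\<lambda>x. f a x + (\<Sum>g\<in>S. f g x)) A = infsum (f a) A + (\<Sum>g\<in>S. infsum (f g) A)"
    using infsum_add[OF fa IH(1)] IH(2) by simp
  ultimately show ?case using insert by simp
qed

lemma cmod_diff_sq_le: "(cmod (a - b))\<^sup>2 \<le> 2 * (cmod a)\<^sup>2 + 2 * (cmod b)\<^sup>2"
proof -
  have "cmod (a - b) \<le> cmod a + cmod b" by (rule norm_triangle_ineq4)
  hence "(cmod (a - b))\<^sup>2 \<le> (cmod a + cmod b)\<^sup>2" by (simp add: power_mono)
  also have "\<dots> \<le> 2 * (cmod a)\<^sup>2 + 2 * (cmod b)\<^sup>2"
  proof -
    have "2 * (cmod a)\<^sup>2 + 2 * (cmod b)\<^sup>2 - (cmod a + cmod b)\<^sup>2 = (cmod a - cmod b)\<^sup>2"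
      by (simp add: power2_eq_square algebra_simps)
    thus ?thesis using zero_le_power2[of "cmod a - cmod b"] by linarith
  qed
  finally show ?thesis .
qed

lemma not_tau_sets:
  fixes G :: "('g, 'b) monoid_scheme" and \<delta> :: real
  assumes G: "group G" and nt: "\<not> property_tau G"
    and S: "finite S" "S \<subseteq> carrier G" and dpos: "\<delta> > 0"
  shows "\<exists>H\<in>finite_index_subgroups G. \<exists>A \<subseteq> lcosets G H. A \<noteq> {} \<and> 2 * card A \<le> card (lcosets G H) \<and>
           real (\<Sum>g\<in>S. card (bdry (\<lambda>g c. inv\<^bsub>G\<^esub> g <#\<^bsub>G\<^esub> c) (lcosets G H) A g)) \<le> 2*\<delta>*card A"
proof -
  define FIS where "FIS = finite_index_subgroups G"
  obtain \<Xi> :: "nat \<Rightarrow> 'g set \<Rightarrow> 'g set \<Rightarrow> complex" where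
    X1: "\<And>k. \<Xi> k \<in> tau_sum_space G" and X2: "\<And>k. tau_normsq G (\<Xi> k) = 1"
    and X3: "\<And>g. g \<in> carrier G \<Longrightarrow> (\<lambda>k. tau_normsq G (\<lambda>H. (\<lambda>c. quasi_reg G g (\<Xi> k H) c - \<Xi> k H c))) \<longlonglongrightarrow> 0"
    using nt unfolding property_tau_def by blast
  define \<epsilon> where "\<epsilon> = \<delta>\<^sup>2/(8*(card S + 1))"
  have e0: "\<epsilon> > 0" unfolding \<epsilon>_def using dpos by simp
  define D where "D g k = tau_normsq G (\<lambda>H. (\<lambda>c. quasi_reg G g (\<Xi> k H) c - \<Xi> k H c))" for g k
  have "(\<lambda>k. \<Sum>g\<in>S. D g k) \<longlonglongrightarrow> (\<Sum>g\<in>S. 0)"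
    unfolding D_def by (intro tendsto_sum X3) (use S in auto)
  hence "(\<lambda>k. \<Sum>g\<in>S. D g k) \<longlonglongrightarrow> 0" by simp
  hence "\<forall>\<^sub>F k in sequentially. (\<Sum>g\<in>S. D g k) < \<epsilon>/2"
    using e0 by (intro order_tendstoD(2)) auto
  then obtain N where "\<forall>k\<ge>N. (\<Sum>g\<in>S. D g k) < \<epsilon>/2" unfolding eventually_sequentially by blast
  then obtain k where k: "(\<Sum>g\<in>S. D g k) < \<epsilon>/2" by blast
  define \<xi> where "\<xi> = \<Xi> k"
  define n where "n H = l2_normsq G H (\<xi> H)" for H
  define d where "d g H = l2_normsq G H (\<lambda>c. quasi_reg G g (\<xi> H) c - \<xi> H c)" for g H
  have nsum: "n summable_on FIS" using X1[of k] unfolding tau_sum_space_def n_def \<xi>_def FIS_def by auto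
  have n1: "infsum n FIS = 1" using X2[of k] unfolding tau_normsq_def n_def \<xi>_def FIS_def by simp
  have n0: "n H \<ge> 0" for H unfolding n_def l2_normsq_def by (auto intro: sum_nonneg)
  have d0: "d g H \<ge> 0" for g H unfolding d_def l2_normsq_def by (auto intro: sum_nonneg)
  have Hsub: "subgroup H G" "finite (lcosets G H)" if "H \<in> FIS" for H
    using that unfolding FIS_def finite_index_subgroups_def by auto
  have qr: "quasi_reg G g \<eta> c = \<eta> (inv\<^bsub>G\<^esub> g <#\<^bsub>G\<^esub> c)" for g \<eta> c unfolding quasi_reg_def by simp
  have bijH: "bij_betw (\<lambda>c. inv\<^bsub>G\<^esub> g <#\<^bsub>G\<^esub> c) (lcosets G H) (lcosets G H)" if "H \<in> FIS" "g \<in> carrier G" for H g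
    using lcosets_act_bij[OF G Hsub(1)[OF that(1)]] that(2) G by (simp add: group.inv_closed)
  have dle: "d g H \<le> 4 * n H" if "H \<in> FIS" "g \<in> carrier G" for g H
  proof -
    have "d g H \<le> (\<Sum>c\<in>lcosets G H. 2 * (cmod (\<xi> H (inv\<^bsub>G\<^esub> g <#\<^bsub>G\<^esub> c)))\<^sup>2 + 2 * (cmod (\<xi> H c))\<^sup>2)"
      unfolding d_def l2_normsq_def qr by (intro sum_mono cmod_diff_sq_le)
    also have "\<dots> = 2 * (\<Sum>c\<in>lcosets G H. (cmod (\<xi> H (inv\<^bsub>G\<^esub> g <#\<^bsub>G\<^esub> c)))\<^sup>2) + 2 * n H"
      unfolding n_def l2_normsq_def by (simp add: sum.distrib sum_distrib_left)
    also have "(\<Sum>c\<in>lcosets G H. (cmod (\<xi> H (inv\<^bsub>G\<^esub> g <#\<^bsub>G\<^esub> c)))\<^sup>2) = n H"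
      unfolding n_def l2_normsq_def using sum.reindex_bij_betw[OF bijH[OF that], of "\<lambda>c. (cmod (\<xi> H c))\<^sup>2"] by simp
    finally show ?thesis by simp
  qed
  have dsum: "d g summable_on FIS" if "g \<in> carrier G" for g
  proof (rule summable_on_comparison_test[where f = "\<lambda>H. 4 * n H"])
    show "(\<lambda>H. 4 * n H) summable_on FIS" using nsum by (intro summable_on_cmult_right)
    show "\<And>H. H \<in> FIS \<Longrightarrow> d g H \<le> 4 * n H" using dle that by auto
    show "\<And>H. H \<in> FIS \<Longrightarrow> 0 \<le> d g H" using d0 by auto
  qed
  have Dd: "D g k = infsum (d g) FIS" for g
    unfolding D_def tau_normsq_def d_def \<xi>_def FIS_def by simp
  define Ds where "Ds H = (\<Sum>g\<in>S. d g H)" for H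
  have Dss: "Ds summable_on FIS" "infsum Ds FIS = (\<Sum>g\<in>S. infsum (d g) FIS)"
    using finite_sum_infsum[OF S(1), of d FIS] dsum S(2) unfolding Ds_def by auto
  have "\<exists>H\<in>FIS. n H > 0 \<and> Ds H \<le> \<epsilon> * n H"
  proof (rule ccontr)
    assume a: "\<not> ?thesis"
    have le: "\<epsilon> * n H \<le> Ds H" if "H \<in> FIS" for H
    proof (cases "n H > 0")
      case True thus ?thesis using a that by force
    next
      case False hence "n H = 0" using n0[of H] by linarith
      thus ?thesis unfolding Ds_def using d0 by (simp add: sum_nonneg)
    qed
    have "infsum (\<lambda>H. \<epsilon> * n H) FIS \<le> infsum Ds FIS"
      by (rule infsum_mono[OF summable_on_cmult_right[OF nsum] Dss(1) le])
    hence "\<epsilon> \<le> (\<Sum>g\<in>S. D g k)" using n1 Dss(2) Dd by (simp add: infsum_cmult_right[OF nsum])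
    thus False using k e0 by linarith
  qed
  then obtain H where H: "H \<in> FIS" "n H > 0" "Ds H \<le> \<epsilon> * n H" by blast
  have sum0: "(\<Sum>c\<in>lcosets G H. \<xi> H c) = 0"
  proof -
    have inv1: "quasi_reg_invariant G H (\<lambda>_. 1)" unfolding quasi_reg_invariant_def quasi_reg_def by simp
    have "l2_inner G H (\<xi> H) (\<lambda>_. 1) = 0"
      using X1[of k] H(1) inv1 unfolding tau_sum_space_def \<xi>_def FIS_def by blast
    thus ?thesis unfolding l2_inner_def by simp
  qed
  have "\<exists>A \<subseteq> lcosets G H. A \<noteq> {} \<and> 2 * card A \<le> card (lcosets G H) \<and>
           real (\<Sum>g\<in>S. card (bdry (\<lambda>g c. inv\<^bsub>G\<^esub> g <#\<^bsub>G\<^esub> c) (lcosets G H) A g)) \<le> 2*\<delta>*card A"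
  proof (rule complex_to_set[where \<xi> = "\<xi> H"])
    show "finite (lcosets G H)" using Hsub(2)[OF H(1)] .
    show "finite S" by fact
    show "\<And>g. g \<in> S \<Longrightarrow> bij_betw (\<lambda>c. inv\<^bsub>G\<^esub> g <#\<^bsub>G\<^esub> c) (lcosets G H) (lcosets G H)"
      using bijH[OF H(1)] S(2) by auto
    show "\<delta> > 0" by fact
    show "(\<Sum>c\<in>lcosets G H. \<xi> H c) = 0" by fact
    show "0 < (\<Sum>c\<in>lcosets G H. (cmod (\<xi> H c))\<^sup>2)" using H(2) unfolding n_def l2_normsq_def .
    show "(\<Sum>g\<in>S. \<Sum>c\<in>lcosets G H. (cmod (\<xi> H (inv\<^bsub>G\<^esub> g <#\<^bsub>G\<^esub> c) - \<xi> H c))\<^sup>2)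
          \<le> \<delta>\<^sup>2 / real (8 * (card S + 1)) * (\<Sum>c\<in>lcosets G H. (cmod (\<xi> H c))\<^sup>2)"
      using H(3) unfolding Ds_def d_def n_def l2_normsq_def qr \<epsilon>_def by simp
  qed
  thus ?thesis using H(1) unfolding FIS_def by blast
qed



lemma suminf_eq_infsum_nonneg:
  fixes f :: "nat \<Rightarrow> real"
  assumes "\<And>n. f n \<ge> 0" "summable f"
  shows "suminf f = infsum f UNIV"
proof -
  have "f summable_on UNIV" using assms summable_on_UNIV_nonneg_real_iff by blast
  hence "f sums infsum f UNIV" by (intro has_sum_imp_sums has_sum_infsum)
  thus ?thesis by (simp add: sums_iff)
qed

lemma summable_perm:
  fixes f :: "nat \<Rightarrow> real"
  assumes "bij \<tau>" "\<And>n. f n \<ge> 0"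
  shows "summable (\<lambda>n. f (\<tau> n)) \<longleftrightarrow> summable f"
proof -
  have "summable (\<lambda>n. f (\<tau> n)) \<longleftrightarrow> (\<lambda>n. f (\<tau> n)) summable_on UNIV"
    using summable_on_UNIV_nonneg_real_iff[of "\<lambda>n. f (\<tau> n)"] assms(2) by simp
  also have "\<dots> \<longleftrightarrow> f summable_on UNIV" using summable_on_reindex_bij_betw[of \<tau> UNIV UNIV f] assms(1) by simp
  also have "\<dots> \<longleftrightarrow> summable f" using summable_on_UNIV_nonneg_real_iff[of f] assms(2) by simp
  finally show ?thesis .
qed

lemma suminf_perm:
  fixes f :: "nat \<Rightarrow> real"
  assumes "bij \<tau>" "\<And>n. f n \<ge> 0" "summable f"
  shows "suminf (\<lambda>n. f (\<tau> n)) = suminf f"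
proof -
  have s2: "summable (\<lambda>n. f (\<tau> n))" using summable_perm[OF assms(1), of f] assms(2,3) by simp
  have "suminf (\<lambda>n. f (\<tau> n)) = infsum (\<lambda>n. f (\<tau> n)) UNIV"
    using suminf_eq_infsum_nonneg[of "\<lambda>n. f (\<tau> n)"] s2 assms(2) by simp
  also have "\<dots> = infsum f UNIV" using infsum_reindex_bij_betw[of \<tau> UNIV UNIV f] assms(1) by simp
  also have "\<dots> = suminf f" using suminf_eq_infsum_nonneg[of f] assms(2,3) by simp
  finally show ?thesis .
qed

lemma lp_space_perm:
  assumes "bij \<tau>"
  shows "(\<lambda>n. f (\<tau> n)) \<in> lp_space p \<longleftrightarrow> f \<in> lp_space p"
  unfolding lp_space_def using summable_perm[OF assms, of "\<lambda>n. cmod (f n) powr p"] by simp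

lemma perm_isometry:
  assumes "bij \<tau>"
  shows "lp_isometry p (\<lambda>f n. f (\<tau> n))"
proof -
  have bi: "bij (inv_into UNIV \<tau>)" using assms by (rule bij_imp_bij_inv)
  have b: "bij_betw (\<lambda>f n. f (\<tau> n)) (lp_space p) (lp_space p)"
  proof (rule bij_betw_byWitness[where f' = "\<lambda>f n. f (inv_into UNIV \<tau> n)"])
    show "\<forall>a\<in>lp_space p. (\<lambda>n. a (\<tau> (inv_into UNIV \<tau> n))) = a"
      using assms by (simp add: bij_def surj_f_inv_f)
    show "\<forall>a\<in>lp_space p. (\<lambda>n. a (inv_into UNIV \<tau> (\<tau> n))) = a"
      using assms by (simp add: bij_def inv_f_f)
    show "(\<lambda>f n. f (\<tau> n)) ` lp_space p \<subseteq> lp_space p" using lp_space_perm[OF assms] by auto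
    show "(\<lambda>f n. f (inv_into UNIV \<tau> n)) ` lp_space p \<subseteq> lp_space p" using lp_space_perm[OF bi] by auto
  qed
  have n: "lp_norm p (\<lambda>n. f (\<tau> n)) = lp_norm p f" if "f \<in> lp_space p" for f
    unfolding lp_norm_def using suminf_perm[OF assms, of "\<lambda>n. cmod (f n) powr p"] that
    unfolding lp_space_def by simp
  show ?thesis unfolding lp_isometry_def using b n by simp
qed


lemma suminf_block:
  fixes \<psi> :: "nat \<Rightarrow> 'a::{comm_monoid_add,t2_space}"
  assumes "finite Y" "inj_on j Y" "\<And>n. n \<notin> j ` Y \<Longrightarrow> \<psi> n = 0"
  shows "suminf \<psi> = (\<Sum>c\<in>Y. \<psi> (j c))"
proof -
  have "suminf \<psi> = (\<Sum>n\<in>j ` Y. \<psi> n)" using assms by (intro suminf_finite) auto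
  also have "\<dots> = (\<Sum>c\<in>Y. \<psi> (j c))" using assms(2) by (simp add: sum.reindex)
  finally show ?thesis .
qed

lemma construct_not_T:
  fixes G :: "('g, 'b) monoid_scheme" and p :: real and HH :: "nat \<Rightarrow> 'g set" and AA :: "nat \<Rightarrow> 'g set set"
    and \<beta> :: "nat \<Rightarrow> real"
  assumes G: "group G" and p0: "p > 0"
    and HHs: "\<And>k. subgroup (HH k) G" and HHf: "\<And>k. finite (lcosets G (HH k))"
    and AAs: "\<And>k. AA k \<subseteq> lcosets G (HH k)" and AAne: "\<And>k. AA k \<noteq> {}"
    and AAh: "\<And>k. 2 * card (AA k) \<le> card (lcosets G (HH k))"
    and \<beta>0: "\<And>k. \<beta> k \<ge> 0" and \<beta>lim: "\<beta> \<longlonglongrightarrow> 0"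
    and bd: "\<And>g. g \<in> carrier G \<Longrightarrow> \<forall>\<^sub>F k in sequentially.
              real (card (bdry (\<lambda>g c. inv\<^bsub>G\<^esub> g <#\<^bsub>G\<^esub> c) (lcosets G (HH k)) (AA k) g)) \<le> \<beta> k * card (AA k)"
  shows "\<not> property_T_lp G p"
proof -
  define X where "X k = lcosets G (HH k)" for k
  define I where "I = (SIGMA k:UNIV. X k)"
  have Xf: "finite (X k)" for k unfolding X_def by (rule HHf)
  have Xne: "X k \<noteq> {}" for k using AAs[of k] AAne[of k] unfolding X_def by auto
  have Icount: "countable I" unfolding I_def using Xf by (intro countable_SIGMA) (auto intro: countable_finite)
  have Iinf: "infinite I"
  proof
    assume "finite I"
    hence "finite (fst ` I)" by simp
    moreover have "fst ` I = UNIV"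
    proof -
      have "k \<in> fst ` I" for k
      proof -
        obtain c where "c \<in> X k" using Xne[of k] by auto
        thus ?thesis unfolding I_def by force
      qed
      thus ?thesis by auto
    qed
    ultimately show False by simp
  qed
  define e where "e = from_nat_into I"
  define t where "t = to_nat_on I"
  have eI: "e n \<in> I" for n unfolding e_def using Iinf by (intro from_nat_into) auto
  have te: "t (e n) = n" for n unfolding e_def t_def using Icount Iinf by simp
  have et: "e (t i) = i" if "i \<in> I" for i unfolding e_def t_def using Icount that by simp
  have t_inj: "t i = t i' \<Longrightarrow> i \<in> I \<Longrightarrow> i' \<in> I \<Longrightarrow> i = i'" for i i' using et by metis
  define act :: "'g \<Rightarrow> nat \<times> 'g set \<Rightarrow> nat \<times> 'g set" where "act h i = (fst i, h <#\<^bsub>G\<^esub> snd i)" for h i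
  have actI: "act h i \<in> I" if "h \<in> carrier G" "i \<in> I" for h i
  proof -
    have "snd i \<in> X (fst i)" using that(2) unfolding I_def by auto
    hence "h <#\<^bsub>G\<^esub> snd i \<in> X (fst i)"
      using lcosets_act_bij[OF G HHs that(1)] unfolding X_def bij_betw_def by auto
    thus ?thesis unfolding act_def I_def by auto
  qed
  have Xsub: "c \<subseteq> carrier G" if cX: "c \<in> X k" for c k
  proof -
    obtain x where x: "x \<in> carrier G" "c = x <#\<^bsub>G\<^esub> HH k" using cX unfolding X_def lcosets_def by auto
    thus ?thesis using group.l_coset_subset_G[OF G subgroup.subset[OF HHs] x(1)] by simp
  qed
  have act_comp: "act h (act h' i) = act (h \<otimes>\<^bsub>G\<^esub> h') i" if "h \<in> carrier G" "h' \<in> carrier G" "i \<in> I" for h h' i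
  proof -
    have "snd i \<in> X (fst i)" using that(3) unfolding I_def by auto
    hence "snd i \<subseteq> carrier G" by (rule Xsub)
    thus ?thesis unfolding act_def using group.lcos_m_assoc[OF G _ that(1,2)] by simp
  qed
  have act_one: "act \<one>\<^bsub>G\<^esub> i = i" if "i \<in> I" for i
  proof -
    have "snd i \<in> X (fst i)" using that unfolding I_def by auto
    hence "snd i \<subseteq> carrier G" by (rule Xsub)
    thus ?thesis unfolding act_def using group.lcos_mult_one[OF G] by (simp add: prod_eq_iff)
  qed
  define \<tau> where "\<tau> h n = t (act h (e n))" for h n
  have e_tau: "e (\<tau> h n) = act h (e n)" if "h \<in> carrier G" for h n
    unfolding \<tau>_def using et actI[OF that eI] by simp
  have tau_comp: "\<tau> h (\<tau> h' n) = \<tau> (h \<otimes>\<^bsub>G\<^esub> h') n" if "h \<in> carrier G" "h' \<in> carrier G" for h h' n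
    unfolding \<tau>_def using et[OF actI[OF that(2) eI]] act_comp[OF that eI] by simp
  have tau_one: "\<tau> \<one>\<^bsub>G\<^esub> n = n" for n unfolding \<tau>_def using act_one[OF eI] te by simp
  have tau_inv1: "\<tau> h (\<tau> (inv\<^bsub>G\<^esub> h) n) = n" if "h \<in> carrier G" for h n
    using tau_comp[OF that group.inv_closed[OF G that]] tau_one group.r_inv[OF G that] by simp
  have tau_inv2: "\<tau> (inv\<^bsub>G\<^esub> h) (\<tau> h n) = n" if "h \<in> carrier G" for h n
    using tau_comp[OF group.inv_closed[OF G that] that] tau_one group.l_inv[OF G that] by simp
  have tau_bij: "bij (\<tau> h)" if "h \<in> carrier G" for h
    by (rule bij_betw_byWitness[where f' = "\<tau> (inv\<^bsub>G\<^esub> h)"]) (use tau_inv1[OF that] tau_inv2[OF that] in auto)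
  define \<pi> where "\<pi> g f = (\<lambda>n. f (\<tau> (inv\<^bsub>G\<^esub> g) n))" for g and f :: "nat \<Rightarrow> complex"
  have orth: "orth_rep G p \<pi>"
    unfolding orth_rep_def
  proof (intro conjI ballI)
    fix g assume g: "g \<in> carrier G"
    show "lp_isometry p (\<pi> g)" unfolding \<pi>_def
      using perm_isometry[OF tau_bij[OF group.inv_closed[OF G g]]] by simp
  next
    fix g g' f assume g: "g \<in> carrier G" and g': "g' \<in> carrier G"
    have "inv\<^bsub>G\<^esub> (g \<otimes>\<^bsub>G\<^esub> g') = inv\<^bsub>G\<^esub> g' \<otimes>\<^bsub>G\<^esub> inv\<^bsub>G\<^esub> g"
      using group.inv_mult_group[OF G g g'] .
    thus "\<pi> (g \<otimes>\<^bsub>G\<^esub> g') f = \<pi> g (\<pi> g' f)" unfolding \<pi>_def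
      using tau_comp[OF group.inv_closed[OF G g'] group.inv_closed[OF G g]] by simp
  qed
  have dual: "dual_rep G \<pi> g h = (\<lambda>n. h (\<tau> (inv\<^bsub>G\<^esub> g) n))" if g: "g \<in> carrier G" for g h
  proof
    fix n
    have "\<pi> (inv\<^bsub>G\<^esub> g) (unit_vec n) = (\<lambda>m. unit_vec n (\<tau> g m))"
      unfolding \<pi>_def using group.inv_inv[OF G g] by simp
    hence "dual_rep G \<pi> g h n = (\<Sum>m. unit_vec n (\<tau> g m) * h m)"
      unfolding dual_rep_def lp_pairing_def by simp
    also have "\<dots> = (\<Sum>m\<in>{\<tau> (inv\<^bsub>G\<^esub> g) n}. unit_vec n (\<tau> g m) * h m)"
    proof (rule suminf_finite)
      fix m assume "m \<notin> {\<tau> (inv\<^bsub>G\<^esub> g) n}"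
      hence "\<tau> g m \<noteq> n" using tau_inv2[OF g, of m] by auto
      thus "unit_vec n (\<tau> g m) * h m = 0" unfolding unit_vec_def by simp
    qed simp
    also have "\<dots> = h (\<tau> (inv\<^bsub>G\<^esub> g) n)" using tau_inv1[OF g, of n] unfolding unit_vec_def by simp
    finally show "dual_rep G \<pi> g h n = h (\<tau> (inv\<^bsub>G\<^esub> g) n)" .
  qed
  define j where "j k c = t (k, c)" for k c
  have ej: "e (j k c) = (k, c)" if "c \<in> X k" for k c unfolding j_def using et that unfolding I_def by auto
  have blk: "n \<in> j k ` X k" if "fst (e n) = k" for n k
  proof -
    have "e n = (k, snd (e n))" "snd (e n) \<in> X k" using eI[of n] that unfolding I_def by auto
    hence "n = j k (snd (e n))" unfolding j_def using te[of n] by metis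
    thus ?thesis using \<open>snd (e n) \<in> X k\<close> by blast
  qed
  have jinj: "inj_on (j k) (X k)" for k
    by (rule inj_onI) (metis ej prod.inject)
  have blocksum: "suminf \<psi> = (\<Sum>c\<in>X k. \<psi> (j k c))"
    if "\<And>n. fst (e n) \<noteq> k \<Longrightarrow> \<psi> n = 0" for k and \<psi> :: "nat \<Rightarrow> real"
    using suminf_block[OF Xf jinj, where \<psi>=\<psi>] that blk by blast
  have blocksumc: "suminf \<psi> = (\<Sum>c\<in>X k. \<psi> (j k c))"
    if "\<And>n. fst (e n) \<noteq> k \<Longrightarrow> \<psi> n = 0" for k and \<psi> :: "nat \<Rightarrow> complex"
    using suminf_block[OF Xf jinj, where \<psi>=\<psi>] that blk by blast
  have blocksummable: "summable \<psi>"
    if "\<And>n. fst (e n) \<noteq> k \<Longrightarrow> \<psi> n = 0" for k and \<psi> :: "nat \<Rightarrow> real"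
  proof (rule summable_finite[of "j k ` X k"])
    show "finite (j k ` X k)" using Xf by simp
    fix n assume "n \<notin> j k ` X k" thus "\<psi> n = 0" using that blk[of n k] by blast
  qed
  define \<alpha> where "\<alpha> k = real (card (AA k)) / real (card (X k))" for k
  define \<phi> where "\<phi> k c = (if c \<in> AA k then 1 else 0) - \<alpha> k" for k c
  define L where "L k = (\<Sum>c\<in>X k. \<bar>\<phi> k c\<bar> powr p)" for k
  define Fv where "Fv k n = (if fst (e n) = k then complex_of_real (\<phi> k (snd (e n)) / L k powr (1/p)) else 0)" for k n
  have cX: "card (X k) > 0" for k using Xf Xne by (simp add: card_gt_0_iff)
  have Af: "finite (AA k)" for k using AAs[of k] Xf[of k] unfolding X_def by (rule finite_subset)
  have cA: "card (AA k) > 0" for k using Af AAne by (simp add: card_gt_0_iff)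
  have \<alpha>h: "\<alpha> k \<le> 1/2" for k
    using AAh[of k] cX[of k] unfolding \<alpha>_def X_def by (simp add: field_simps)
  define \<kappa> where "\<kappa> = (1/2::real) powr p"
  have \<kappa>0: "\<kappa> > 0" unfolding \<kappa>_def by simp
  have Lb: "L k \<ge> card (AA k) * \<kappa>" for k
  proof -
    have "real (card (AA k)) * \<kappa> = (\<Sum>c\<in>AA k. \<kappa>)" by simp
    also have "\<dots> \<le> (\<Sum>c\<in>AA k. \<bar>\<phi> k c\<bar> powr p)"
    proof (rule sum_mono)
      fix c assume "c \<in> AA k"
      hence "\<bar>\<phi> k c\<bar> = 1 - \<alpha> k" using \<alpha>h[of k] unfolding \<phi>_def by simp
      hence "1/2 \<le> \<bar>\<phi> k c\<bar>" using \<alpha>h[of k] by simp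
      thus "\<kappa> \<le> \<bar>\<phi> k c\<bar> powr p" unfolding \<kappa>_def using p0 by (intro powr_mono2) auto
    qed
    also have "\<dots> \<le> L k" unfolding L_def using AAs[of k] Xf[of k] unfolding X_def
      by (intro sum_mono2) auto
    finally show ?thesis .
  qed
  have Lpos: "L k > 0" for k using Lb[of k] cA[of k] \<kappa>0
    by (smt (verit) mult_pos_pos of_nat_0_less_iff)
  have Fj: "Fv k (j k c) = complex_of_real (\<phi> k c / L k powr (1/p))" if "c \<in> X k" for k c
    unfolding Fv_def using ej[OF that] by simp
  have F0: "Fv k n = 0" if "fst (e n) \<noteq> k" for k n unfolding Fv_def using that by simp
  have pw: "(\<bar>x\<bar> / L k powr (1/p)) powr p = \<bar>x\<bar> powr p / L k" for x k
  proof -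
    have "(\<bar>x\<bar> / L k powr (1/p)) powr p = \<bar>x\<bar> powr p / (L k powr (1/p)) powr p"
      by (rule powr_divide)
    also have "(L k powr (1/p)) powr p = L k" using p0 Lpos[of k] by (simp add: powr_powr)
    finally show ?thesis .
  qed
  have Fsp: "Fv k \<in> lp_space p" for k
    unfolding lp_space_def by (auto intro!: blocksummable[of k] simp: F0)
  have Fnorm: "lp_norm p (Fv k) = 1" for k
  proof -
    have "(\<Sum>n. cmod (Fv k n) powr p) = (\<Sum>c\<in>X k. cmod (Fv k (j k c)) powr p)"
      by (rule blocksum) (simp add: F0)
    also have "\<dots> = (\<Sum>c\<in>X k. \<bar>\<phi> k c\<bar> powr p / L k)"
    proof (rule sum.cong)
      fix c assume c: "c \<in> X k"
      have "cmod (Fv k (j k c)) = \<bar>\<phi> k c / L k powr (1/p)\<bar>" unfolding Fj[OF c] by (rule norm_of_real)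
      also have "\<dots> = \<bar>\<phi> k c\<bar> / L k powr (1/p)" by (simp add: abs_divide)
      finally have "cmod (Fv k (j k c)) = \<bar>\<phi> k c\<bar> / L k powr (1/p)" .
      thus "cmod (Fv k (j k c)) powr p = \<bar>\<phi> k c\<bar> powr p / L k" using pw by simp
    qed simp
    also have "\<dots> = 1" using Lpos[of k] unfolding L_def by (simp add: sum_divide_distrib[symmetric])
    finally show ?thesis unfolding lp_norm_def by simp
  qed
  have sumphi: "(\<Sum>c\<in>X k. \<phi> k c) = 0" for k
  proof -
    have "(\<Sum>c\<in>X k. (if c \<in> AA k then 1 else 0::real)) = (\<Sum>c\<in>{c\<in>X k. c \<in> AA k}. 1)"
      using Xf[of k] by (simp add: sum.If_cases Int_def)
    also have "{c\<in>X k. c \<in> AA k} = AA k" using AAs[of k] unfolding X_def by auto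
    finally have s1: "(\<Sum>c\<in>X k. (if c \<in> AA k then 1 else 0::real)) = card (AA k)" by simp
    have "(\<Sum>c\<in>X k. \<phi> k c) = card (AA k) - card (X k) * \<alpha> k"
      unfolding \<phi>_def by (simp add: sum_subtractf s1)
    also have "\<dots> = 0" unfolding \<alpha>_def using cX[of k] by simp
    finally show ?thesis .
  qed
  have Fprime: "Fv k \<in> lp_prime G p \<pi>" for k
    unfolding lp_prime_def
  proof (intro CollectI conjI ballI impI)
    show "Fv k \<in> lp_space p" by (rule Fsp)
    fix h assume "h \<in> lp_space (conj_exp p)" and hinv0: "\<forall>g\<in>carrier G. dual_rep G \<pi> g h = h"
    have hinv: "h (\<tau> (inv\<^bsub>G\<^esub> g) n) = h n" if "g \<in> carrier G" for g n
      using hinv0 dual[OF that, of h] that by (metis)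
    obtain c0 where c0: "c0 \<in> X k" using Xne[of k] by auto
    have hc: "h (j k c) = h (j k c0)" if c: "c \<in> X k" for c
    proof -
      obtain x where x: "x \<in> carrier G" "c0 = x <#\<^bsub>G\<^esub> HH k" using c0 unfolding X_def lcosets_def by auto
      obtain y where y: "y \<in> carrier G" "c = y <#\<^bsub>G\<^esub> HH k" using c unfolding X_def lcosets_def by auto
      define a where "a = y \<otimes>\<^bsub>G\<^esub> inv\<^bsub>G\<^esub> x"
      have a: "a \<in> carrier G" unfolding a_def using x y G by (simp add: group.inv_closed monoid.m_closed group.is_monoid)
      have ia: "inv\<^bsub>G\<^esub> a \<in> carrier G" using a G by (simp add: group.inv_closed)
      have "a <#\<^bsub>G\<^esub> c0 = (a \<otimes>\<^bsub>G\<^esub> x) <#\<^bsub>G\<^esub> HH k"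
        using x a group.lcos_m_assoc[OF G subgroup.subset[OF HHs]] by simp
      also have "a \<otimes>\<^bsub>G\<^esub> x = y" unfolding a_def using x y G
        by (simp add: group.inv_closed group.is_monoid monoid.m_assoc group.l_inv monoid.r_one)
      finally have ac: "a <#\<^bsub>G\<^esub> c0 = c" using y by simp
      have "\<tau> (inv\<^bsub>G\<^esub> (inv\<^bsub>G\<^esub> a)) (j k c0) = j k c"
        using group.inv_inv[OF G a] ej[OF c0] ac unfolding \<tau>_def act_def j_def by simp
      thus ?thesis using hinv[OF ia, of "j k c0"] by simp
    qed
    have "lp_pairing (Fv k) h = (\<Sum>c\<in>X k. Fv k (j k c) * h (j k c))"
      unfolding lp_pairing_def by (rule blocksumc) (simp add: F0)
    also have "\<dots> = (\<Sum>c\<in>X k. complex_of_real (\<phi> k c / L k powr (1/p)) * h (j k c0))"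
      by (rule sum.cong) (simp_all add: Fj hc)
    also have "\<dots> = complex_of_real ((\<Sum>c\<in>X k. \<phi> k c) / L k powr (1/p)) * h (j k c0)"
      by (simp add: sum_distrib_right[symmetric] sum_divide_distrib[symmetric])
    also have "\<dots> = 0" using sumphi by simp
    finally show "lp_pairing (Fv k) h = 0" .
  qed
  have conv: "(\<lambda>k. lp_norm p (\<lambda>n. \<pi> g (Fv k) n - Fv k n)) \<longlonglongrightarrow> 0" if g: "g \<in> carrier G" for g
  proof -
    define Bd where "Bd k = bdry (\<lambda>g c. inv\<^bsub>G\<^esub> g <#\<^bsub>G\<^esub> c) (X k) (AA k) g" for k
    have ig: "inv\<^bsub>G\<^esub> g \<in> carrier G" using G g by (simp add: group.inv_closed)
    have fst_tau: "fst (e (\<tau> (inv\<^bsub>G\<^esub> g) n)) = fst (e n)" for n using e_tau[OF ig] unfolding act_def by simp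
    have eq: "lp_norm p (\<lambda>n. \<pi> g (Fv k) n - Fv k n) = (real (card (Bd k)) / L k) powr (1/p)" for k
    proof -
      have "(\<Sum>n. cmod (\<pi> g (Fv k) n - Fv k n) powr p) = (\<Sum>c\<in>X k. cmod (\<pi> g (Fv k) (j k c) - Fv k (j k c)) powr p)"
        by (rule blocksum) (simp add: \<pi>_def F0 fst_tau)
      also have "\<dots> = (\<Sum>c\<in>X k. (if c \<in> Bd k then 1 else 0) / L k)"
      proof (rule sum.cong)
        fix c assume c: "c \<in> X k"
        have "e (\<tau> (inv\<^bsub>G\<^esub> g) (j k c)) = (k, inv\<^bsub>G\<^esub> g <#\<^bsub>G\<^esub> c)"
          using e_tau[OF ig] ej[OF c] unfolding act_def by simp
        hence "\<pi> g (Fv k) (j k c) = complex_of_real (\<phi> k (inv\<^bsub>G\<^esub> g <#\<^bsub>G\<^esub> c) / L k powr (1/p))"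
          unfolding \<pi>_def Fv_def by simp
        hence "\<pi> g (Fv k) (j k c) - Fv k (j k c) = complex_of_real ((\<phi> k (inv\<^bsub>G\<^esub> g <#\<^bsub>G\<^esub> c) - \<phi> k c) / L k powr (1/p))"
          using Fj[OF c] by (simp add: diff_divide_distrib)
        hence "cmod (\<pi> g (Fv k) (j k c) - Fv k (j k c)) = \<bar>(\<phi> k (inv\<^bsub>G\<^esub> g <#\<^bsub>G\<^esub> c) - \<phi> k c) / L k powr (1/p)\<bar>"
          by (simp only: norm_of_real)
        also have "\<dots> = \<bar>\<phi> k (inv\<^bsub>G\<^esub> g <#\<^bsub>G\<^esub> c) - \<phi> k c\<bar> / L k powr (1/p)" by (simp add: abs_divide)
        also have "\<bar>\<phi> k (inv\<^bsub>G\<^esub> g <#\<^bsub>G\<^esub> c) - \<phi> k c\<bar> = \<bar>(if c \<in> Bd k then 1 else 0::real)\<bar>"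
          unfolding \<phi>_def Bd_def bdry_def using c by auto
        finally have cm: "cmod (\<pi> g (Fv k) (j k c) - Fv k (j k c)) = \<bar>(if c \<in> Bd k then 1 else 0::real)\<bar> / L k powr (1/p)" .
        have "cmod (\<pi> g (Fv k) (j k c) - Fv k (j k c)) powr p = \<bar>(if c \<in> Bd k then 1 else 0::real)\<bar> powr p / L k"
          unfolding cm by (rule pw)
        thus "cmod (\<pi> g (Fv k) (j k c) - Fv k (j k c)) powr p = (if c \<in> Bd k then 1 else 0) / L k"
          by (cases "c \<in> Bd k") simp_all
      qed simp
      also have "\<dots> = real (card (Bd k)) / L k"
      proof -
        have "(\<Sum>c\<in>X k. (if c \<in> Bd k then 1 else 0::real)) = (\<Sum>c\<in>{c\<in>X k. c \<in> Bd k}. 1)"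
          using Xf[of k] by (simp add: sum.If_cases Int_def)
        also have "{c\<in>X k. c \<in> Bd k} = Bd k" unfolding Bd_def bdry_def by auto
        finally have "(\<Sum>c\<in>X k. (if c \<in> Bd k then 1 else 0::real)) = card (Bd k)" by simp
        thus ?thesis by (simp add: sum_divide_distrib[symmetric])
      qed
      finally show ?thesis unfolding lp_norm_def by simp
    qed
    have ub: "\<forall>\<^sub>F k in sequentially. lp_norm p (\<lambda>n. \<pi> g (Fv k) n - Fv k n) \<le> (\<beta> k / \<kappa>) powr (1/p)"
      using bd[OF g]
    proof (rule eventually_mono)
      fix k assume h: "real (card (bdry (\<lambda>g c. inv\<^bsub>G\<^esub> g <#\<^bsub>G\<^esub> c) (lcosets G (HH k)) (AA k) g)) \<le> \<beta> k * card (AA k)"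
      hence h': "real (card (Bd k)) \<le> \<beta> k * card (AA k)" unfolding Bd_def X_def .
      have "real (card (Bd k)) / L k \<le> \<beta> k * card (AA k) / L k"
        using h' Lpos[of k] by (simp add: divide_right_mono)
      also have "\<dots> \<le> \<beta> k * card (AA k) / (card (AA k) * \<kappa>)"
        using Lb[of k] cA[of k] \<kappa>0 \<beta>0[of k] Lpos[of k] by (intro divide_left_mono) auto
      also have "\<dots> = \<beta> k / \<kappa>" using cA[of k] by simp
      finally have "real (card (Bd k)) / L k \<le> \<beta> k / \<kappa>" .
      hence "(real (card (Bd k)) / L k) powr (1/p) \<le> (\<beta> k / \<kappa>) powr (1/p)"
        using p0 Lpos[of k] by (intro powr_mono2) auto
      thus "lp_norm p (\<lambda>n. \<pi> g (Fv k) n - Fv k n) \<le> (\<beta> k / \<kappa>) powr (1/p)" using eq by simp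
    qed
    have lb: "\<forall>\<^sub>F k in sequentially. 0 \<le> lp_norm p (\<lambda>n. \<pi> g (Fv k) n - Fv k n)"
      unfolding lp_norm_def by simp
    have lim: "(\<lambda>k. (\<beta> k / \<kappa>) powr (1/p)) \<longlonglongrightarrow> 0"
    proof (rule tendsto_zero_powrI)
      show "(\<lambda>k. \<beta> k / \<kappa>) \<longlonglongrightarrow> 0" using tendsto_divide_zero[OF \<beta>lim, of \<kappa>] by simp
      show "(\<lambda>k. 1/p) \<longlonglongrightarrow> 1/p" by simp
      show "\<forall>\<^sub>F k in sequentially. 0 \<le> \<beta> k / \<kappa>" using \<beta>0 \<kappa>0 by simp
      show "0 < 1/p" using p0 by simp
    qed
    show ?thesis by (rule tendsto_sandwich[OF lb ub tendsto_const lim])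
  qed
  show ?thesis unfolding property_T_lp_def using orth Fprime Fnorm conv by blast
qed


theorem proposition1p10:
  fixes G :: "('g, 'b) monoid_scheme" and p :: real
  assumes "group G"
    and "countable (carrier G)"
    and "1 < p" and "p \<noteq> 2"
    and "property_T_lp G p"
  shows "property_tau G"
proof (rule ccontr)
  assume nt: "\<not> property_tau G"
  have G: "group G" by fact
  have cc: "countable (carrier G)" by fact
  have p0: "p > 0" using assms(3) by simp
  define en where "en = from_nat_into (carrier G)"
  define S where "S k = en ` {..<k}" for k
  have ne: "carrier G \<noteq> {}" using group.is_monoid[OF G] monoid.one_closed by blast
  have Sf: "finite (S k)" for k unfolding S_def by simp
  have Ssub: "S k \<subseteq> carrier G" for k unfolding S_def en_def using from_nat_into[OF ne] by auto
  define P where "P k H A \<longleftrightarrow> subgroup H G \<and> finite (lcosets G H) \<and> A \<subseteq> lcosets G H \<and> A \<noteq> {} \<and>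
     2 * card A \<le> card (lcosets G H) \<and>
     real (\<Sum>g\<in>S k. card (bdry (\<lambda>g c. inv\<^bsub>G\<^esub> g <#\<^bsub>G\<^esub> c) (lcosets G H) A g)) \<le> 2*(1/real (Suc k))*card A"
    for k H A
  have "\<forall>k. \<exists>H. \<exists>A. P k H A"
  proof
    fix k
    have "(1::real)/real (Suc k) > 0" by simp
    from not_tau_sets[OF G nt Sf Ssub this] show "\<exists>H A. P k H A"
      unfolding P_def finite_index_subgroups_def by blast
  qed
  then obtain HH where "\<forall>k. \<exists>A. P k (HH k) A" by metis
  then obtain AA where PA: "\<And>k. P k (HH k) (AA k)" by metis
  define \<beta> where "\<beta> k = 2 / real (Suc k)" for k
  have "\<not> property_T_lp G p"
  proof (rule construct_not_T[OF G p0, where HH = HH and AA = AA and \<beta> = \<beta>])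
    show "\<And>k. subgroup (HH k) G" "\<And>k. finite (lcosets G (HH k))" "\<And>k. AA k \<subseteq> lcosets G (HH k)"
      "\<And>k. AA k \<noteq> {}" "\<And>k. 2 * card (AA k) \<le> card (lcosets G (HH k))"
      using PA unfolding P_def by auto
    show "\<And>k. 0 \<le> \<beta> k" unfolding \<beta>_def by simp
    show "\<beta> \<longlonglongrightarrow> 0" unfolding \<beta>_def using LIMSEQ_Suc[OF lim_const_over_n[of 2]] by simp
    fix g assume g: "g \<in> carrier G"
    define N where "N = Suc (to_nat_on (carrier G) g)"
    have "real (card (bdry (\<lambda>g c. inv\<^bsub>G\<^esub> g <#\<^bsub>G\<^esub> c) (lcosets G (HH k)) (AA k) g)) \<le> \<beta> k * card (AA k)"
      if "k \<ge> N" for k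
    proof -
      have "g = en (to_nat_on (carrier G) g)" unfolding en_def using cc g by simp
      hence gS: "g \<in> S k" unfolding S_def using that N_def by auto
      have "card (bdry (\<lambda>g c. inv\<^bsub>G\<^esub> g <#\<^bsub>G\<^esub> c) (lcosets G (HH k)) (AA k) g)
          \<le> (\<Sum>g\<in>S k. card (bdry (\<lambda>g c. inv\<^bsub>G\<^esub> g <#\<^bsub>G\<^esub> c) (lcosets G (HH k)) (AA k) g))"
        by (rule member_le_sum[OF gS]) (simp_all add: Sf)
      hence "real (card (bdry (\<lambda>g c. inv\<^bsub>G\<^esub> g <#\<^bsub>G\<^esub> c) (lcosets G (HH k)) (AA k) g))
          \<le> real (\<Sum>g\<in>S k. card (bdry (\<lambda>g c. inv\<^bsub>G\<^esub> g <#\<^bsub>G\<^esub> c) (lcosets G (HH k)) (AA k) g))"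
        by (simp only: of_nat_le_iff)
      also have "\<dots> \<le> 2*(1/real (Suc k))*card (AA k)" using PA[of k] unfolding P_def by blast
      also have "\<dots> = \<beta> k * card (AA k)" unfolding \<beta>_def by simp
      finally show ?thesis .
    qed
    thus "\<forall>\<^sub>F k in sequentially. real (card (bdry (\<lambda>g c. inv\<^bsub>G\<^esub> g <#\<^bsub>G\<^esub> c) (lcosets G (HH k)) (AA k) g)) \<le> \<beta> k * card (AA k)"
      unfolding eventually_sequentially by blast
  qed
  thus False using assms(5) by contradiction
qed

end
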